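(* Let $X=(|X|,X^0,\mathbb{P}^{\mathrm{top}}X)$ be a multipointed $d$-space. Let $d(X)$ be the set of continuous paths $[0,1]\to|X|$ consisting of all constant paths together with all Moore compositions of the form \[(\gamma_1\phi_1\mu_{\ell_1})*\dots*(\gamma_n\phi_n\mu_{\ell_n})\] with $n\ge 1$, $\ell_1,\dots,\ell_n>0$, $\ell_1+\dots+\ell_n=1$, where $\gamma_1,\dots,\gamma_n$ are execution paths of $X$ and $\phi_i\in\mathcal{I}(1)$ for $i=1,\dots,n$. Then the pair $\vec{\mathrm{Sp}}(X):=(|X|,d(X))$ is a directed space, and the mapping $X\mapsto\vec{\mathrm{Sp}}(X)$, sending a map of multipointed $d$-spaces to the same underlying continuous map, is a well-defined functor $\vec{\mathrm{Sp}}$ from the category of multipointed $d$-spaces to the category of directed spaces.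
   Context: Let $\mathbf{Top}$ be the category of $\Delta$-generated spaces (or of $\Delta$-Hausdorff $\Delta$-generated spaces). For $\ell>0$ let $\mu_\ell:[0,\ell]\to[0,1]$, $\mu_\ell(t)=t/\ell$. For $\ell,\ell'\ge0$, $\mathcal{M}(\ell,\ell')$ is the set of non-decreasing surjective continuous maps $[0,\ell]\to[0,\ell']$, and $\mathcal{I}(\ell)$ is the set of non-decreasing continuous maps $[0,1]\to[0,\ell]$ (constant maps allowed). A Moore path of length $\ell\ge0$ in a space $U$ is a continuous map $[0,\ell]\to U$; the Moore composition of $\gamma_1:[0,\ell_1]\to U$ and $\gamma_2:[0,\ell_2]\to U$ with $\gamma_1(\ell_1)=\gamma_2(0)$ is the path $\gamma_1*\gamma_2:[0,\ell_1+\ell_2]\to U$ equal to $\gamma_1(t)$ for $t\in[0,\ell_1]$ and $\gamma_2(t-\ell_1)$ for $t\in[\ell_1,\ell_1+\ell_2]$ (it is associative). For $\gamma_1,\gamma_2:[0,1]\to U$ with $\gamma_1(1)=\gamma_2(0)$ the normalized composition is $\gamma_1*_N\gamma_2=(\gamma_1\mu_{1/2})*(\gamma_2\mu_{1/2})$. A multipointed $d$-space is a triple $X=(|X|,X^0,\mathbb{P}^{\mathrm{top}}X)$ where $|X|$ is a space, $X^0\subset|X|$ is a set (the states), and $\mathbb{P}^{\mathrm{top}}X$ is a set of continuous maps $[0,1]\to|X|$ (execution paths) such that: $\gamma(0),\gamma(1)\in X^0$ for every execution path $\gamma$; $\gamma\phi$ is an execution path for every execution path $\gamma$ and every $\phi\in\mathcal{M}(1,1)$;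 $\gamma_1*_N\gamma_2$ is an execution path for composable execution paths $\gamma_1,\gamma_2$. A map $f:X\to Y$ of multipointed $d$-spaces is a continuous map $f:|X|\to|Y|$ with $f(X^0)\subset Y^0$ and $f\gamma\in\mathbb{P}^{\mathrm{top}}Y$ for all $\gamma\in\mathbb{P}^{\mathrm{top}}X$. A directed space is a pair $Y=(|Y|,d(Y))$ where $|Y|$ is a space and $d(Y)$ is a set of continuous maps $[0,1]\to|Y|$ (directed paths) which contains all constant paths, is closed under normalized composition, and satisfies $\gamma\phi\in d(Y)$ for all $\gamma\in d(Y)$, $\phi\in\mathcal{I}(1)$. A morphism of directed spaces is a continuous map of underlying spaces sending directed paths to directed paths. *)

theory Defs
  imports "HOL-Analysis.Analysis" "HOL-Homology.Simplices"
begin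

abbreviation simplex_top :: "nat \<Rightarrow> (nat \<Rightarrow> real) topology" where
  "simplex_top n \<equiv> subtopology (powertop_real UNIV) (standard_simplex n)"

definition delta_generated :: "'a topology \<Rightarrow> bool" where
  "delta_generated T \<longleftrightarrow>
     (\<forall>U. U \<subseteq> topspace T \<longrightarrow>
        (\<forall>n \<sigma>. continuous_map (simplex_top n) T \<sigma> \<longrightarrow>
               openin (simplex_top n) {s \<in> standard_simplex n. \<sigma> s \<in> U})
        \<longrightarrow> openin T U)"

text \<open>Paths [0,ell] -> U are represented as functions on real; only their values
  on [0,ell] are relevant. A path belongs to a set of paths S if it agrees on [0,1]
  with some member of S.\<close>
definition path_in :: "(real \<Rightarrow> 'a) set \<Rightarrow> (real \<Rightarrow> 'a) \<Rightarrow> bool" where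
  "path_in S g \<longleftrightarrow> (\<exists>h\<in>S. \<forall>t\<in>{0..1}. g t = h t)"

definition mu :: "real \<Rightarrow> real \<Rightarrow> real" where
  "mu l t = t / l"

definition Mset :: "real \<Rightarrow> real \<Rightarrow> (real \<Rightarrow> real) set" where
  "Mset l l' = {\<phi>. continuous_on {0..l} \<phi> \<and> mono_on {0..l} \<phi> \<and> \<phi> ` {0..l} = {0..l'}}"

definition Iset :: "real \<Rightarrow> (real \<Rightarrow> real) set" where
  "Iset l = {\<phi>. continuous_on {0..1} \<phi> \<and> mono_on {0..1} \<phi> \<and> \<phi> ` {0..1} \<subseteq> {0..l}}"

text \<open>Iterated Moore composition of a non-empty list of (length, path) pairs
  (gamma_1 * ... * gamma_n); associativity makes the bracketing irrelevant.\<close>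
fun moore :: "(real \<times> (real \<Rightarrow> 'a)) list \<Rightarrow> real \<Rightarrow> 'a" where
  "moore [] t = undefined"
| "moore [(l, g)] t = g t"
| "moore ((l, g) # p # ps) t = (if t \<le> l then g t else moore (p # ps) (t - l))"

definition norm_comp :: "(real \<Rightarrow> 'a) \<Rightarrow> (real \<Rightarrow> 'a) \<Rightarrow> real \<Rightarrow> 'a" where
  "norm_comp g1 g2 = moore [(1/2, g1 \<circ> mu (1/2)), (1/2, g2 \<circ> mu (1/2))]"

record 'a mdspace =
  mtop :: "'a topology"
  states :: "'a set"
  epaths :: "(real \<Rightarrow> 'a) set"

definition is_mdspace :: "'a mdspace \<Rightarrow> bool" where
  "is_mdspace X \<longleftrightarrow>
     delta_generated (mtop X) \<and>
     states X \<subseteq> topspace (mtop X) \<and>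
     (\<forall>\<gamma>\<in>epaths X. continuous_map (top_of_set {0..1}) (mtop X) \<gamma>) \<and>
     (\<forall>\<gamma>\<in>epaths X. \<gamma> 0 \<in> states X \<and> \<gamma> 1 \<in> states X) \<and>
     (\<forall>\<gamma>\<in>epaths X. \<forall>\<phi>\<in>Mset 1 1. path_in (epaths X) (\<gamma> \<circ> \<phi>)) \<and>
     (\<forall>\<gamma>1\<in>epaths X. \<forall>\<gamma>2\<in>epaths X. \<gamma>1 1 = \<gamma>2 0 \<longrightarrow>
         path_in (epaths X) (norm_comp \<gamma>1 \<gamma>2))"

definition mdmap :: "'a mdspace \<Rightarrow> 'b mdspace \<Rightarrow> ('a \<Rightarrow> 'b) \<Rightarrow> bool" where
  "mdmap X Y f \<longleftrightarrow>
     continuous_map (mtop X) (mtop Y) f \<and>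
     f ` states X \<subseteq> states Y \<and>
     (\<forall>\<gamma>\<in>epaths X. path_in (epaths Y) (f \<circ> \<gamma>))"

record 'a dspace =
  dtop :: "'a topology"
  dpaths :: "(real \<Rightarrow> 'a) set"

definition is_dspace :: "'a dspace \<Rightarrow> bool" where
  "is_dspace Y \<longleftrightarrow>
     delta_generated (dtop Y) \<and>
     (\<forall>\<gamma>\<in>dpaths Y. continuous_map (top_of_set {0..1}) (dtop Y) \<gamma>) \<and>
     (\<forall>x\<in>topspace (dtop Y). path_in (dpaths Y) (\<lambda>t. x)) \<and>
     (\<forall>\<gamma>1\<in>dpaths Y. \<forall>\<gamma>2\<in>dpaths Y. \<gamma>1 1 = \<gamma>2 0 \<longrightarrow>
         path_in (dpaths Y) (norm_comp \<gamma>1 \<gamma>2)) \<and>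
     (\<forall>\<gamma>\<in>dpaths Y. \<forall>\<phi>\<in>Iset 1. path_in (dpaths Y) (\<gamma> \<circ> \<phi>))"

definition dmap :: "'a dspace \<Rightarrow> 'b dspace \<Rightarrow> ('a \<Rightarrow> 'b) \<Rightarrow> bool" where
  "dmap X Y f \<longleftrightarrow>
     continuous_map (dtop X) (dtop Y) f \<and>
     (\<forall>\<gamma>\<in>dpaths X. path_in (dpaths Y) (f \<circ> \<gamma>))"

definition piece :: "real \<times> (real \<Rightarrow> 'a) \<times> (real \<Rightarrow> real) \<Rightarrow> real \<times> (real \<Rightarrow> 'a)" where
  "piece c = (case c of (l, \<gamma>, \<phi>) \<Rightarrow> (l, \<gamma> \<circ> \<phi> \<circ> mu l))"

definition Sp_paths :: "'a mdspace \<Rightarrow> (real \<Rightarrow> 'a) set" where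
  "Sp_paths X =
     {g. (\<exists>x\<in>topspace (mtop X). \<forall>t\<in>{0..1}. g t = x) \<or>
         (\<exists>ps::(real \<times> (real \<Rightarrow> 'a) \<times> (real \<Rightarrow> real)) list.
            ps \<noteq> [] \<and>
            (\<forall>(l, \<gamma>, \<phi>)\<in>set ps. 0 < l \<and> \<gamma> \<in> epaths X \<and> \<phi> \<in> Iset 1) \<and>
            (\<Sum>c\<leftarrow>ps. fst c) = 1 \<and>
            (\<forall>i. Suc i < length ps \<longrightarrow>
               (case (ps ! i, ps ! Suc i) of ((l, \<gamma>, \<phi>), (l', \<gamma>', \<phi>')) \<Rightarrow>
                  \<gamma> (\<phi> 1) = \<gamma>' (\<phi>' 0))) \<and>
            (\<forall>t\<in>{0..1}. g t = moore (map piece ps) t))}"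

definition Sp :: "'a mdspace \<Rightarrow> 'a dspace" where
  "Sp X = \<lparr>dtop = mtop X, dpaths = Sp_paths X\<rparr>"

definition Sp_map :: "('a \<Rightarrow> 'b) \<Rightarrow> ('a \<Rightarrow> 'b)" where
  "Sp_map f = f"

end

theory Submission
  imports Defs
begin

definition endpt :: "real \<times> (real \<Rightarrow> 'a) \<times> (real \<Rightarrow> real) \<Rightarrow> 'a" where
  "endpt c = (case c of (l, \<gamma>, \<phi>) \<Rightarrow> \<gamma> (\<phi> 1))"
definition startpt :: "real \<times> (real \<Rightarrow> 'a) \<times> (real \<Rightarrow> real) \<Rightarrow> 'a" where
  "startpt c = (case c of (l, \<gamma>, \<phi>) \<Rightarrow> \<gamma> (\<phi> 0))"

fun chain :: "(real \<times> (real \<Rightarrow> 'a) \<times> (real \<Rightarrow> real)) list \<Rightarrow> bool" where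
  "chain (c # d # r) = (endpt c = startpt d \<and> chain (d # r))"
| "chain _ = True"

definition goodp :: "(real \<Rightarrow> 'a) set \<Rightarrow> (real \<times> (real \<Rightarrow> 'a) \<times> (real \<Rightarrow> real)) list \<Rightarrow> bool" where
  "goodp E ps \<longleftrightarrow> ps \<noteq> [] \<and> (\<forall>(l, \<gamma>, \<phi>)\<in>set ps. 0 < l \<and> \<gamma> \<in> E \<and> \<phi> \<in> Iset 1) \<and> chain ps"

abbreviation len :: "(real \<times> (real \<Rightarrow> 'a) \<times> (real \<Rightarrow> real)) list \<Rightarrow> real" where
  "len ps \<equiv> (\<Sum>c\<leftarrow>ps. fst c)"

definition MM :: "(real \<times> (real \<Rightarrow> 'a) \<times> (real \<Rightarrow> real)) list \<Rightarrow> real \<Rightarrow> 'a" where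
  "MM ps = moore (map piece ps)"

lemma case_eq_endpt: "(case (a, b) of ((l, \<gamma>, \<phi>), (l', \<gamma>', \<phi>')) \<Rightarrow> \<gamma> (\<phi> 1) = \<gamma>' (\<phi>' 0)) = (endpt a = startpt b)"
  by (auto simp: endpt_def startpt_def split: prod.splits)

lemma chain_iff':
  "(\<forall>i. Suc i < length ps \<longrightarrow> endpt (ps ! i) = startpt (ps ! Suc i)) \<longleftrightarrow> chain ps"
proof (induction ps rule: chain.induct)
  case (1 c d r)
  have "(\<forall>i. Suc i < length (c # d # r) \<longrightarrow> endpt ((c#d#r) ! i) = startpt ((c#d#r) ! Suc i))
      \<longleftrightarrow> endpt c = startpt d \<and> (\<forall>i. Suc i < length (d # r) \<longrightarrow> endpt ((d#r) ! i) = startpt ((d#r) ! Suc i))"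
    apply (rule iffI)
     apply (intro conjI allI impI)
      apply (drule spec[of _ 0]) apply simp
     apply (drule_tac x="Suc i" in spec) apply simp
    apply (intro allI impI)
    apply (case_tac i) apply auto
    done
  then show ?case using 1 by simp
qed auto

lemma chain_iff:
  "(\<forall>i. Suc i < length ps \<longrightarrow>
     (case (ps ! i, ps ! Suc i) of ((l, \<gamma>, \<phi>), (l', \<gamma>', \<phi>')) \<Rightarrow> \<gamma> (\<phi> 1) = \<gamma>' (\<phi>' 0)))
   \<longleftrightarrow> chain ps"
  unfolding case_eq_endpt by (rule chain_iff')

lemma chain_cons: "ps \<noteq> [] \<Longrightarrow> chain (c # ps) \<longleftrightarrow> endpt c = startpt (hd ps) \<and> chain ps"
  by (cases ps) auto

lemma chain_append: "xs \<noteq> [] \<Longrightarrow> ys \<noteq> [] \<Longrightarrow>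
   chain (xs @ ys) \<longleftrightarrow> chain xs \<and> chain ys \<and> endpt (last xs) = startpt (hd ys)"
proof (induction xs rule: chain.induct)
  case (1 c d r) then show ?case by auto
next
  case ("2_2" c) then show ?case by (auto simp: chain_cons)
qed auto

lemma MM_single: "MM [(l, \<gamma>, \<phi>)] t = \<gamma> (\<phi> (t / l))"
  by (simp add: piece_def mu_def MM_def)

lemma MM_cons: "rest \<noteq> [] \<Longrightarrow> MM ((l, \<gamma>, \<phi>) # rest) t = (if t \<le> l then \<gamma> (\<phi> (t / l)) else MM rest (t - l))"
  by (cases rest) (auto simp: piece_def mu_def MM_def)

lemma goodp_tl: "goodp E (c # rest) \<Longrightarrow> rest \<noteq> [] \<Longrightarrow> goodp E rest"
  by (cases rest) (auto simp: goodp_def)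

lemma len_nonneg0: "\<forall>c\<in>set ps. 0 \<le> fst c \<Longrightarrow> 0 \<le> len ps"
  by (induction ps) auto

lemma goodp_pos: "goodp E ps \<Longrightarrow> c \<in> set ps \<Longrightarrow> 0 < fst c"
  unfolding goodp_def by auto

lemma len_nonneg: "goodp E ps \<Longrightarrow> 0 \<le> len ps"
  by (meson goodp_pos len_nonneg0 less_imp_le)

lemma len_pos: "goodp E ps \<Longrightarrow> 0 < len ps"
proof -
  assume g: "goodp E ps"
  then obtain c r where ps: "ps = c # r" unfolding goodp_def by (cases ps) auto
  have "0 < fst c" using g ps by (auto simp: goodp_def)
  moreover have "0 \<le> len r"
  proof (cases "r = []")
    case False then show ?thesis using goodp_tl g ps len_nonneg by blast
  qed simp
  ultimately show ?thesis using ps by simp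
qed

lemma MM_start: "goodp E ps \<Longrightarrow> MM ps 0 = startpt (hd ps)"
proof -
  assume g: "goodp E ps"
  then obtain l \<gamma> \<phi> r where ps: "ps = (l, \<gamma>, \<phi>) # r" unfolding goodp_def by (cases ps) auto
  have "0 < l" using g ps by (auto simp: goodp_def)
  then show ?thesis using ps by (cases "r = []") (auto simp: MM_cons MM_single startpt_def)
qed

lemma MM_end: "goodp E ps \<Longrightarrow> MM ps (len ps) = endpt (last ps)"
proof (induction ps rule: chain.induct)
  case (1 c d r)
  obtain l \<gamma> \<phi> where c: "c = (l, \<gamma>, \<phi>)" by (cases c) auto
  have g: "goodp E (d # r)" using goodp_tl 1(2) by blast
  have "0 < len (d # r)" using len_pos[OF g] .
  then show ?case using 1 g c by (simp add: MM_cons)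
next
  case ("2_2" c)
  obtain l \<gamma> \<phi> where c: "c = (l, \<gamma>, \<phi>)" by (cases c) auto
  then show ?case using "2_2" by (auto simp: MM_single endpt_def goodp_def)
qed (auto simp: goodp_def)

lemma MM_cons_ge: "goodp E (c # rest) \<Longrightarrow> rest \<noteq> [] \<Longrightarrow> fst c \<le> t \<Longrightarrow> MM (c # rest) t = MM rest (t - fst c)"
proof -
  assume g: "goodp E (c # rest)" and r: "rest \<noteq> []" and t: "fst c \<le> t"
  obtain l \<gamma> \<phi> where c: "c = (l, \<gamma>, \<phi>)" by (cases c) auto
  have l: "0 < l" using g c by (auto simp: goodp_def)
  have ch: "endpt c = startpt (hd rest)" using g r by (auto simp: goodp_def chain_cons)
  have s: "MM rest 0 = startpt (hd rest)" using MM_start goodp_tl g r by blast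
  show ?thesis
  proof (cases "t = l")
    case True
    then show ?thesis using c r l ch s by (simp add: MM_cons endpt_def)
  next
    case False
    then show ?thesis using c r t by (simp add: MM_cons)
  qed
qed

lemma MM_append: "\<forall>c\<in>set xs. 0 \<le> fst c \<Longrightarrow> xs \<noteq> [] \<Longrightarrow> ys \<noteq> [] \<Longrightarrow>
  MM (xs @ ys) t = (if t \<le> len xs then MM xs t else MM ys (t - len xs))"
proof (induction xs arbitrary: t rule: chain.induct)
  case (1 c d r)
  obtain l \<gamma> \<phi> where c: "c = (l, \<gamma>, \<phi>)" by (cases c) auto
  have "0 \<le> len (d # r)" using 1(2) len_nonneg0[of "d # r"] by simp
  then show ?case using 1 c by (auto simp: MM_cons diff_diff_eq)
next
  case ("2_2" c)
  obtain l \<gamma> \<phi> where c: "c = (l, \<gamma>, \<phi>)" by (cases c) auto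
  then show ?case using "2_2" by (simp add: MM_cons MM_single)
qed auto


lemma single_Iset:
  assumes l: "0 < l" and pc: "\<phi>c \<in> Iset 1" and m: "0 < m"
    and c: "continuous_on {0..m} \<phi>" and mo: "mono_on {0..m} \<phi>" and im: "\<phi> ` {0..m} \<subseteq> {0..l}"
  shows "(\<lambda>r. \<phi>c (\<phi> (m * r) / l)) \<in> Iset 1"
proof -
  have pc1: "continuous_on {0..1} \<phi>c" "mono_on {0..1} \<phi>c" "\<phi>c ` {0..1} \<subseteq> {0..1}"
    using pc by (auto simp: Iset_def)
  have mr: "(\<lambda>r. m * r) ` {0..1} \<subseteq> {0..m}" using m by (auto simp: mult_le_cancel_left1)
  have in1: "\<phi> (m * r) / l \<in> {0..1}" if "r \<in> {0..1}" for r
  proof -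
    have "\<phi> (m * r) \<in> {0..l}" using im mr that by blast
    then show ?thesis using l by auto
  qed
  have c1: "continuous_on {0..1} (\<lambda>r. \<phi> (m * r))"
    by (rule continuous_on_compose2[OF c _ mr]) (intro continuous_intros)
  have c2: "continuous_on {0..1} (\<lambda>r. \<phi> (m * r) / l)"
    using c1 by (intro continuous_intros) (use l in auto)
  have c3: "continuous_on {0..1} (\<lambda>r. \<phi>c (\<phi> (m * r) / l))"
    by (rule continuous_on_compose2[OF pc1(1) c2]) (use in1 in auto)
  have m3: "mono_on {0..1} (\<lambda>r. \<phi>c (\<phi> (m * r) / l))"
  proof (rule mono_onI)
    fix r s :: real assume rs: "r \<in> {0..1}" "s \<in> {0..1}" "r \<le> s"
    have "\<phi> (m * r) \<le> \<phi> (m * s)"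
      using mono_onD[OF mo] mr rs m by (auto intro: mult_left_mono)
    then have "\<phi> (m * r) / l \<le> \<phi> (m * s) / l" using l by (simp add: divide_right_mono)
    then show "\<phi>c (\<phi> (m * r) / l) \<le> \<phi>c (\<phi> (m * s) / l)"
      using mono_onD[OF pc1(2)] in1 rs by blast
  qed
  have i3: "(\<lambda>r. \<phi>c (\<phi> (m * r) / l)) ` {0..1} \<subseteq> {0..1}" using in1 pc1(3) by blast
  show ?thesis using c3 m3 i3 by (simp add: Iset_def)
qed

lemma reparam:
  "goodp E ps \<Longrightarrow> 0 < m \<Longrightarrow> continuous_on {0..m} \<phi> \<Longrightarrow> mono_on {0..m} \<phi> \<Longrightarrow>
   \<phi> ` {0..m} \<subseteq> {0..len ps} \<Longrightarrow>
   \<exists>ps'. goodp E ps' \<and> len ps' = m \<and> (\<forall>t\<in>{0..m}. MM ps' t = MM ps (\<phi> t))"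
proof (induction ps arbitrary: m \<phi>)
  case Nil then show ?case by (simp add: goodp_def)
next
  case (Cons c rest)
  obtain l \<gamma> \<phi>c where c: "c = (l, \<gamma>, \<phi>c)" by (cases c) auto
  have l: "0 < l" and \<gamma>: "\<gamma> \<in> E" and pc: "\<phi>c \<in> Iset 1"
    using Cons.prems(1) c by (auto simp: goodp_def)
  have mono: "\<phi> s \<le> \<phi> t" if "s \<in> {0..m}" "t \<in> {0..m}" "s \<le> t" for s t
    using mono_onD[OF Cons.prems(4)] that by blast
  have imt: "\<phi> t \<in> {0..len (c # rest)}" if "t \<in> {0..m}" for t using Cons.prems(5) that by blast
  have single: "\<exists>ps'. goodp E ps' \<and> len ps' = m' \<and> (\<forall>t\<in>{0..m'}. MM ps' t = \<gamma> (\<phi>c (\<phi>' t / l)))"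
    if "0 < m'" "continuous_on {0..m'} \<phi>'" "mono_on {0..m'} \<phi>'" "\<phi>' ` {0..m'} \<subseteq> {0..l}" for m' \<phi>'
  proof (intro exI conjI)
    let ?\<psi> = "\<lambda>r. \<phi>c (\<phi>' (m' * r) / l)"
    have "?\<psi> \<in> Iset 1" by (rule single_Iset[OF l pc that])
    then show "goodp E [(m', \<gamma>, ?\<psi>)]" using that(1) \<gamma> by (simp add: goodp_def)
    show "len [(m', \<gamma>, ?\<psi>)] = m'" by simp
    show "\<forall>t\<in>{0..m'}. MM [(m', \<gamma>, ?\<psi>)] t = \<gamma> (\<phi>c (\<phi>' t / l))"
      using that(1) by (simp add: MM_single)
  qed
  show ?case
  proof (cases "rest = []")
    case True
    have "\<phi> ` {0..m} \<subseteq> {0..l}" using Cons.prems(5) True c by simp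
    then obtain ps' where ps': "goodp E ps'" "len ps' = m" "\<forall>t\<in>{0..m}. MM ps' t = \<gamma> (\<phi>c (\<phi> t / l))"
      using single[OF Cons.prems(2-4)] by blast
    show ?thesis using ps' True c by (auto simp: MM_single)
  next
    case rne: False
    have grest: "goodp E rest" using goodp_tl Cons.prems(1) rne by blast
    have lenc: "len (c # rest) = l + len rest" using c by simp
    have low: "MM (c # rest) x = \<gamma> (\<phi>c (x / l))" if "x \<le> l" for x
      using that c rne by (simp add: MM_cons)
    have high: "MM (c # rest) x = MM rest (x - l)" if "l \<le> x" for x
      using MM_cons_ge[OF Cons.prems(1) rne] that c by simp
    have m0: "0 \<in> {0..m}" "m \<in> {0..m}" using Cons.prems(2) by auto
    consider (a) "\<phi> m \<le> l" | (b) "l \<le> \<phi> 0" "\<not> \<phi> m \<le> l" | (c) "\<phi> 0 < l" "l < \<phi> m" by linarith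
    then show ?thesis
    proof cases
      case a
      have le: "\<phi> t \<le> l" if "t \<in> {0..m}" for t using mono[OF that m0(2)] that a by auto
      have "\<phi> ` {0..m} \<subseteq> {0..l}" using le imt by fastforce
      then obtain ps' where ps': "goodp E ps'" "len ps' = m" "\<forall>t\<in>{0..m}. MM ps' t = \<gamma> (\<phi>c (\<phi> t / l))"
        using single[OF Cons.prems(2-4)] by blast
      show ?thesis using ps' le low by (intro exI[of _ ps']) auto
    next
      case b
      have ge: "l \<le> \<phi> t" if "t \<in> {0..m}" for t using mono[OF m0(1) that] that b by auto
      have c2: "continuous_on {0..m} (\<lambda>t. \<phi> t - l)" using Cons.prems(3) by (intro continuous_intros)
      have m2: "mono_on {0..m} (\<lambda>t. \<phi> t - l)" using mono by (auto intro: mono_onI)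
      have i2: "(\<lambda>t. \<phi> t - l) ` {0..m} \<subseteq> {0..len rest}" using ge imt lenc by fastforce
      obtain ps' where ps': "goodp E ps'" "len ps' = m" "\<forall>t\<in>{0..m}. MM ps' t = MM rest (\<phi> t - l)"
        using Cons.IH[OF grest Cons.prems(2) c2 m2 i2] by blast
      show ?thesis using ps' ge high by (intro exI[of _ ps']) auto
    next
      case cc: c
      obtain u where u: "0 \<le> u" "u \<le> m" "\<phi> u = l"
        using IVT'[of \<phi> 0 l m] cc Cons.prems(2,3) by force
      have u0: "0 < u" using u cc by (cases "u = 0") auto
      have um: "u < m" using u cc by (cases "u = m") auto
      have le: "\<phi> t \<le> l" if "t \<in> {0..u}" for t using mono[of t u] that u by auto
      have ge: "l \<le> \<phi> t" if "t \<in> {u..m}" for t using mono[of u t] that u by auto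
      have c1: "continuous_on {0..u} \<phi>" using continuous_on_subset[OF Cons.prems(3)] u by auto
      have m1: "mono_on {0..u} \<phi>" using mono u by (auto intro: mono_onI)
      have i1: "\<phi> ` {0..u} \<subseteq> {0..l}" using le imt u by fastforce
      obtain ps1 where ps1: "goodp E ps1" "len ps1 = u" "\<forall>t\<in>{0..u}. MM ps1 t = \<gamma> (\<phi>c (\<phi> t / l))"
        and ps1eq: "ps1 = [(u, \<gamma>, \<lambda>r. \<phi>c (\<phi> (u * r) / l))]"
      proof -
        let ?\<psi> = "\<lambda>r. \<phi>c (\<phi> (u * r) / l)"
        have "?\<psi> \<in> Iset 1" by (rule single_Iset[OF l pc u0 c1 m1 i1])
        then show ?thesis using that[of "[(u, \<gamma>, ?\<psi>)]"] u0 \<gamma> by (simp add: goodp_def MM_single)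
      qed
      let ?\<phi>2 = "\<lambda>t. \<phi> (t + u) - l"
      have sh: "(\<lambda>t. t + u) ` {0..m - u} \<subseteq> {0..m}" using u by auto
      have c2: "continuous_on {0..m - u} ?\<phi>2"
        by (intro continuous_intros continuous_on_compose2[OF Cons.prems(3) _ sh])
      have m2: "mono_on {0..m - u} ?\<phi>2" using mono u by (auto intro!: mono_onI)
      have i2: "?\<phi>2 ` {0..m - u} \<subseteq> {0..len rest}"
      proof
        fix y assume "y \<in> ?\<phi>2 ` {0..m - u}"
        then obtain t where t: "t \<in> {0..m - u}" "y = ?\<phi>2 t" by blast
        have "l \<le> \<phi> (t + u)" using ge t by auto
        moreover have "t + u \<in> {0..m}" using t u by auto
        then have "\<phi> (t + u) \<le> len (c # rest)" using imt by (meson atLeastAtMost_iff)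
        ultimately show "y \<in> {0..len rest}" using t lenc by auto
      qed
      obtain ps2 where ps2: "goodp E ps2" "len ps2 = m - u" "\<forall>t\<in>{0..m - u}. MM ps2 t = MM rest (?\<phi>2 t)"
        using Cons.IH[OF grest _ c2 m2 i2] um by auto
      have ps2ne: "ps2 \<noteq> []" using ps2(1) by (simp add: goodp_def)
      have "startpt (hd ps2) = MM ps2 0" using MM_start[OF ps2(1)] by simp
      also have "\<dots> = MM rest 0" using ps2(3) um u by auto
      also have "\<dots> = startpt (hd rest)" using MM_start[OF grest] .
      also have "\<dots> = endpt c" using Cons.prems(1) rne by (simp add: goodp_def chain_cons)
      finally have j: "startpt (hd ps2) = endpt (last ps1)"
        using ps1eq u(3) c l by (simp add: endpt_def)
      have g: "goodp E (ps1 @ ps2)"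
      proof -
        have "chain (ps1 @ ps2)" using ps1eq ps2ne j ps2(1) by (simp add: goodp_def chain_cons)
        then show ?thesis using ps1(1) ps2(1) by (auto simp: goodp_def)
      qed
      have val: "MM (ps1 @ ps2) t = MM (c # rest) (\<phi> t)" if t: "t \<in> {0..m}" for t
      proof -
        have nn: "\<forall>c\<in>set ps1. 0 \<le> fst c" using ps1eq u0 by simp
        have e: "MM (ps1 @ ps2) t = (if t \<le> u then MM ps1 t else MM ps2 (t - u))"
          using MM_append[OF nn _ ps2ne] ps1eq ps1(2) by simp
        show ?thesis
        proof (cases "t \<le> u")
          case True
          then show ?thesis using e ps1(3) le low t by auto
        next
          case False
          then have "MM ps2 (t - u) = MM rest (\<phi> t - l)" using ps2(3) t by auto
          then show ?thesis using e False ge high t by auto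
        qed
      qed
      show ?thesis using g val ps1(2) ps2(2) by (intro exI[of _ "ps1 @ ps2"]) auto
    qed
  qed
qed


lemma cont_MM:
  "goodp E ps \<Longrightarrow> (\<forall>\<gamma>\<in>E. continuous_map (top_of_set {0..1}) T \<gamma>) \<Longrightarrow>
   continuous_map (top_of_set {0..len ps}) T (MM ps)"
proof (induction ps)
  case Nil then show ?case by (simp add: goodp_def)
next
  case (Cons c rest)
  obtain l \<gamma> \<phi> where c: "c = (l, \<gamma>, \<phi>)" by (cases c) auto
  have l: "0 < l" and \<gamma>: "\<gamma> \<in> E" and pc: "\<phi> \<in> Iset 1"
    using Cons.prems(1) c by (auto simp: goodp_def)
  have pc1: "continuous_on {0..1} \<phi>" "\<phi> ` {0..1} \<subseteq> {0..1}" using pc by (auto simp: Iset_def)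
  have cp: "continuous_map (top_of_set {0..l}) T (\<lambda>t. \<gamma> (\<phi> (t / l)))"
  proof -
    have d: "(\<lambda>t. t / l) ` {0..l} \<subseteq> {0..1}" using l by auto
    have "continuous_on {0..l} (\<lambda>t. \<phi> (t / l))"
      by (rule continuous_on_compose2[OF pc1(1) _ d]) (intro continuous_intros, use l in auto)
    moreover have "(\<lambda>t. \<phi> (t / l)) \<in> {0..l} \<rightarrow> {0..1}" using d pc1(2) by auto
    ultimately have "continuous_map (top_of_set {0..l}) (top_of_set {0..1}) (\<lambda>t. \<phi> (t / l))"
      by simp
    from continuous_map_compose[OF this] Cons.prems(2) \<gamma> show ?thesis by (auto simp: o_def)
  qed
  show ?case
  proof (cases "rest = []")
    case True
    then show ?thesis using cp c by (simp add: MM_single[abs_def])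
  next
    case rne: False
    have grest: "goodp E rest" using goodp_tl Cons.prems(1) rne by blast
    have lr: "0 \<le> len rest" using len_nonneg[OF grest] .
    have IH: "continuous_map (top_of_set {0..len rest}) T (MM rest)" using Cons.IH grest Cons.prems(2) by blast
    have eq: "MM (c # rest) = (\<lambda>t. if t \<le> l then \<gamma> (\<phi> (t / l)) else MM rest (t - l))"
      using c rne by (simp add: MM_cons fun_eq_iff)
    let ?L = "l + len rest"
    have s1: "subtopology (top_of_set {0..?L}) {x. x \<in> topspace (top_of_set {0..?L}) \<and> x \<le> l} = top_of_set {0..l}"
      using lr by (simp add: subtopology_subtopology) (rule arg_cong[where f="top_of_set"], auto)
    have s2: "subtopology (top_of_set {0..?L}) {x. x \<in> topspace (top_of_set {0..?L}) \<and> l \<le> x} = top_of_set {l..?L}"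
      using l by (simp add: subtopology_subtopology) (rule arg_cong[where f="top_of_set"], auto)
    have cr: "continuous_map (top_of_set {l..?L}) T (\<lambda>t. MM rest (t - l))"
    proof -
      have "continuous_map (top_of_set {l..?L}) (top_of_set {0..len rest}) (\<lambda>t. t - l)"
        by (auto intro!: continuous_intros)
      from continuous_map_compose[OF this IH] show ?thesis by (simp add: o_def)
    qed
    have agree: "\<gamma> (\<phi> (l / l)) = MM rest (l - l)"
    proof -
      have "MM rest (l - l) = MM (c # rest) l" using MM_cons_ge[OF Cons.prems(1) rne] c by simp
      also have "\<dots> = \<gamma> (\<phi> (l / l))" using c rne by (simp add: MM_cons)
      finally show ?thesis by simp
    qed
    have "continuous_map (top_of_set {0..?L}) T (\<lambda>t. if t \<le> l then \<gamma> (\<phi> (t / l)) else MM rest (t - l))"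
      apply (rule continuous_map_cases_le[where p="\<lambda>x. x" and q="\<lambda>x. l"])
          apply (simp add: continuous_map_from_subtopology)
         apply simp
        apply (simp only: s1, rule cp)
       apply (simp only: s2, rule cr)
      using agree l by simp
    then show ?thesis using eq c by simp
  qed
qed


definition Fm :: "('a \<Rightarrow> 'b) \<Rightarrow> (real \<Rightarrow> 'b) set \<Rightarrow> real \<times> (real \<Rightarrow> 'a) \<times> (real \<Rightarrow> real) \<Rightarrow> real \<times> (real \<Rightarrow> 'b) \<times> (real \<Rightarrow> real)" where
  "Fm f E' c = (case c of (l, \<gamma>, \<phi>) \<Rightarrow> (l, SOME h. h \<in> E' \<and> (\<forall>t\<in>{0..1}. (f \<circ> \<gamma>) t = h t), \<phi>))"

lemma Fm_props:
  assumes "path_in E' (f \<circ> \<gamma>)"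
  shows "\<exists>h. Fm f E' (l, \<gamma>, \<phi>) = (l, h, \<phi>) \<and> h \<in> E' \<and> (\<forall>t\<in>{0..1}. f (\<gamma> t) = h t)"
proof -
  have ex: "\<exists>h. h \<in> E' \<and> (\<forall>t\<in>{0..1}. (f \<circ> \<gamma>) t = h t)" using assms by (auto simp: path_in_def)
  show ?thesis using someI_ex[OF ex] by (auto simp: Fm_def)
qed

lemma chain_map: "(\<And>c. c \<in> set ps \<Longrightarrow> endpt (F c) = g (endpt c) \<and> startpt (F c) = g (startpt c)) \<Longrightarrow>
  chain ps \<Longrightarrow> chain (map F ps)"
  by (induction ps rule: chain.induct) auto

lemma Fm_good:
  assumes g: "goodp E ps" and E: "\<forall>\<gamma>\<in>E. path_in E' (f \<circ> \<gamma>)"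
  shows "goodp E' (map (Fm f E') ps) \<and> len (map (Fm f E') ps) = len ps \<and>
     (\<forall>t\<in>{0..len ps}. MM (map (Fm f E') ps) t = f (MM ps t))"
proof -
  have props: "\<exists>h. Fm f E' c = (l, h, \<phi>) \<and> h \<in> E' \<and> (\<forall>t\<in>{0..1}. f (\<gamma> t) = h t)
     \<and> 0 < l \<and> \<gamma> \<in> E \<and> \<phi> \<in> Iset 1"
    if "c \<in> set ps" "c = (l, \<gamma>, \<phi>)" for c l \<gamma> \<phi>
    using Fm_props[of E' f \<gamma> l \<phi>] that E g by (auto simp: goodp_def)
  have ph: "\<phi> 0 \<in> {0..1}" "\<phi> 1 \<in> {0..1}" if "\<phi> \<in> Iset 1" for \<phi>
    using that unfolding Iset_def by (auto simp: image_subset_iff)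
  have ch: "chain (map (Fm f E') ps)"
  proof (rule chain_map[where g=f])
    fix c assume c: "c \<in> set ps"
    obtain l \<gamma> \<phi> where cc: "c = (l, \<gamma>, \<phi>)" by (cases c) auto
    from props[OF c cc] obtain h where "Fm f E' c = (l, h, \<phi>)" "\<forall>t\<in>{0..1}. f (\<gamma> t) = h t" "\<phi> \<in> Iset 1"
      by blast
    then show "endpt (Fm f E' c) = f (endpt c) \<and> startpt (Fm f E' c) = f (startpt c)"
      using ph cc by (simp add: endpt_def startpt_def)
  next
    show "chain ps" using g by (simp add: goodp_def)
  qed
  have set: "\<forall>(l, \<gamma>, \<phi>)\<in>set (map (Fm f E') ps). 0 < l \<and> \<gamma> \<in> E' \<and> \<phi> \<in> Iset 1"
  proof safe
    fix l h \<phi> assume "(l, h, \<phi>) \<in> set (map (Fm f E') ps)"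
    then obtain c where c: "c \<in> set ps" "Fm f E' c = (l, h, \<phi>)" by auto
    obtain l' \<gamma> \<phi>' where cc: "c = (l', \<gamma>, \<phi>')" by (cases c) auto
    from props[OF c(1) cc] c(2) show "0 < l" "h \<in> E'" "\<phi> \<in> Iset 1" by auto
  qed
  have fst: "fst (Fm f E' c) = fst c" for c by (cases c) (simp add: Fm_def)
  have len: "len (map (Fm f E') ps) = len ps" by (simp add: o_def fst)
  have val: "\<forall>t\<in>{0..len ps}. MM (map (Fm f E') ps) t = f (MM ps t)"
    using g props
  proof (induction ps)
    case Nil then show ?case by (simp add: goodp_def)
  next
    case (Cons c rest)
    obtain l \<gamma> \<phi> where cc: "c = (l, \<gamma>, \<phi>)" by (cases c) auto
    from Cons.prems(2)[OF _ cc] obtain h where h: "Fm f E' c = (l, h, \<phi>)" "\<forall>t\<in>{0..1}. f (\<gamma> t) = h t"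
      "0 < l" "\<phi> \<in> Iset 1" by auto
    have pv: "h (\<phi> (t / l)) = f (\<gamma> (\<phi> (t / l)))" if "0 \<le> t" "t \<le> l" for t
    proof -
      have "t / l \<in> {0..1}" using that h(3) by auto
      then have "\<phi> (t / l) \<in> {0..1}" using h(4) unfolding Iset_def by blast
      then show ?thesis using h(2) by auto
    qed
    show ?case
    proof (cases "rest = []")
      case True
      then show ?thesis using h cc pv by (auto simp: MM_single)
    next
      case rne: False
      have grest: "goodp E rest" using goodp_tl Cons.prems(1) rne by blast
      have IH: "\<forall>t\<in>{0..len rest}. MM (map (Fm f E') rest) t = f (MM rest t)"
        using Cons.IH[OF grest] Cons.prems(2) by auto
      show ?thesis
      proof
        fix t assume t: "t \<in> {0..len (c # rest)}"
        show "MM (map (Fm f E') (c # rest)) t = f (MM (c # rest) t)"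
        proof (cases "t \<le> l")
          case True then show ?thesis using h cc pv rne t by (simp add: MM_cons)
        next
          case False then show ?thesis using h cc rne t IH by (simp add: MM_cons)
        qed
      qed
    qed
  qed
  have "map (Fm f E') ps \<noteq> []" using g by (simp add: goodp_def)
  then show ?thesis using ch set len val by (simp add: goodp_def)
qed

lemma Sp_paths_iff: "g \<in> Sp_paths X \<longleftrightarrow> (\<exists>x\<in>topspace (mtop X). \<forall>t\<in>{0..1}. g t = x) \<or>
   (\<exists>ps. goodp (epaths X) ps \<and> len ps = 1 \<and> (\<forall>t\<in>{0..1}. g t = MM ps t))"
  unfolding Sp_paths_def goodp_def MM_def chain_iff by auto

lemma norm_comp_val: "norm_comp g1 g2 t = (if t \<le> 1/2 then g1 (2 * t) else g2 (2 * t - 1))"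
proof -
  have "(t - 1/2) / (1/2) = 2 * t - 1" by (simp add: field_simps)
  then show ?thesis by (simp add: norm_comp_def mu_def mult.commute)
qed

lemma path_in_self: "g \<in> S \<Longrightarrow> path_in S g"
  unfolding path_in_def by blast


lemma half:
  assumes "goodp E ps" "len ps = 1" "continuous_on {0..1/2} \<phi>" "mono_on {0..1/2} \<phi>"
    "\<phi> ` {0..1/2} \<subseteq> {0..1}" "\<forall>t\<in>{0..1/2}. g (2 * t) = MM ps (\<phi> t)"
  shows "\<exists>A. goodp E A \<and> len A = 1/2 \<and> (\<forall>t\<in>{0..1/2}. MM A t = g (2 * t))"
  using reparam[of E ps "1/2" \<phi>] assms by auto

lemma twice_props: "continuous_on {0..1/2} (\<lambda>t::real. 2 * t)" "mono_on {0..1/2} (\<lambda>t::real. 2 * t)"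
   "(\<lambda>t::real. 2 * t) ` {0..1/2} \<subseteq> {0..1}"
  by (auto intro!: continuous_intros mono_onI)

lemma const_props: "continuous_on {0..1/2} (\<lambda>t::real. c::real)" "mono_on {0..1/2} (\<lambda>t::real. c)"
   "c \<in> {0..1} \<Longrightarrow> (\<lambda>t::real. c) ` {0..1/2} \<subseteq> {0..1}"
  by (auto intro!: continuous_intros mono_onI simp del: atLeastAtMost_iff)

lemma Sp_norm_comp:
  assumes X: "is_mdspace X" and g1: "g1 \<in> Sp_paths X" and g2: "g2 \<in> Sp_paths X" and j: "g1 1 = g2 0"
  shows "norm_comp g1 g2 \<in> Sp_paths X"
proof -
  let ?E = "epaths X"
  have comp_half: "\<exists>A. goodp ?E A \<and> len A = 1/2 \<and> (\<forall>t\<in>{0..1/2}. MM A t = g (2 * t))"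
    if "goodp ?E ps" "len ps = 1" "\<forall>t\<in>{0..1}. g t = MM ps t" for g ps
    by (rule half[OF that(1,2) twice_props]) (use that(3) in auto)
  have const_half: "\<exists>A. goodp ?E A \<and> len A = 1/2 \<and> (\<forall>t\<in>{0..1/2}. MM A t = g (2 * t))"
    if "goodp ?E ps" "len ps = 1" "\<forall>t\<in>{0..1}. g t = x" "MM ps c = x" "c \<in> {0..1}" for g ps x c
    by (rule half[OF that(1,2) const_props(1,2) const_props(3)[OF that(5)]]) (use that(3,4) in auto)
  show ?thesis
  proof (cases "(\<exists>x\<in>topspace (mtop X). \<forall>t\<in>{0..1}. g1 t = x) \<and> (\<exists>x\<in>topspace (mtop X). \<forall>t\<in>{0..1}. g2 t = x)")
    case True
    then obtain x y where x: "x \<in> topspace (mtop X)" "\<forall>t\<in>{0..1}. g1 t = x" and y: "\<forall>t\<in>{0..1}. g2 t = y" by blast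
    have "x = y" using x y j by auto
    then have "\<forall>t\<in>{0..1}. norm_comp g1 g2 t = x" using x y by (auto simp: norm_comp_val)
    then show ?thesis using x(1) by (auto simp: Sp_paths_iff)
  next
    case False
    have A: "\<exists>A. goodp ?E A \<and> len A = 1/2 \<and> (\<forall>t\<in>{0..1/2}. MM A t = g1 (2 * t))"
    proof (cases "\<exists>x\<in>topspace (mtop X). \<forall>t\<in>{0..1}. g1 t = x")
      case True
      then obtain x where x: "\<forall>t\<in>{0..1}. g1 t = x" by blast
      from False True g2 obtain ps where ps: "goodp ?E ps" "len ps = 1" "\<forall>t\<in>{0..1}. g2 t = MM ps t"
        by (auto simp: Sp_paths_iff)
      have "MM ps 0 = x" using ps(3) x j by auto
      then show ?thesis using const_half[OF ps(1,2) x] by auto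
    next
      case False
      then show ?thesis using g1 comp_half by (auto simp: Sp_paths_iff)
    qed
    have B: "\<exists>B. goodp ?E B \<and> len B = 1/2 \<and> (\<forall>t\<in>{0..1/2}. MM B t = g2 (2 * t))"
    proof (cases "\<exists>x\<in>topspace (mtop X). \<forall>t\<in>{0..1}. g2 t = x")
      case True
      then obtain x where x: "\<forall>t\<in>{0..1}. g2 t = x" by blast
      from False True g1 obtain ps where ps: "goodp ?E ps" "len ps = 1" "\<forall>t\<in>{0..1}. g1 t = MM ps t"
        by (auto simp: Sp_paths_iff)
      have "MM ps 1 = x" using ps(3) x j by auto
      then show ?thesis using const_half[OF ps(1,2) x] by auto
    next
      case False
      then show ?thesis using g2 comp_half by (auto simp: Sp_paths_iff)
    qed
    obtain A where A: "goodp ?E A" "len A = 1/2" "\<forall>t\<in>{0..1/2}. MM A t = g1 (2 * t)" using A by blast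
    obtain B where B: "goodp ?E B" "len B = 1/2" "\<forall>t\<in>{0..1/2}. MM B t = g2 (2 * t)" using B by blast
    have ne: "A \<noteq> []" "B \<noteq> []" using A(1) B(1) by (auto simp: goodp_def)
    have "endpt (last A) = MM A (1/2)" using MM_end[OF A(1)] A(2) by simp
    also have "\<dots> = g1 1" using A(3) by auto
    also have "\<dots> = g2 0" by (rule j)
    also have "\<dots> = MM B 0" using B(3) by auto
    also have "\<dots> = startpt (hd B)" using MM_start[OF B(1)] .
    finally have jj: "endpt (last A) = startpt (hd B)" .
    have gAB: "goodp ?E (A @ B)" using A(1) B(1) ne jj by (auto simp: goodp_def chain_append)
    have lAB: "len (A @ B) = 1" using A(2) B(2) by simp
    have nn: "\<forall>c\<in>set A. 0 \<le> fst c" using goodp_pos[OF A(1)] by (meson less_imp_le)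
    have "\<forall>t\<in>{0..1}. norm_comp g1 g2 t = MM (A @ B) t"
    proof
      fix t :: real assume t: "t \<in> {0..1}"
      show "norm_comp g1 g2 t = MM (A @ B) t"
      proof (cases "t \<le> 1/2")
        case True then show ?thesis using MM_append[OF nn ne] A t by (auto simp: norm_comp_val)
      next
        case False
        then have "t - 1/2 \<in> {0..1/2}" using t by auto
        then have "MM B (t - 1/2) = g2 (2 * t - 1)" using B(3) by (auto simp: algebra_simps)
        have "MM (A @ B) t = MM B (t - 1/2)" using MM_append[OF nn ne, of t] False unfolding A(2) by simp
        then show ?thesis using False \<open>MM B (t - 1/2) = _\<close> by (simp add: norm_comp_val)
      qed
    qed
    then show ?thesis using gAB lAB by (auto simp: Sp_paths_iff)
  qed
qed

lemma Sp_reparam: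
  assumes g: "g \<in> Sp_paths X" and ph: "\<phi> \<in> Iset 1"
  shows "g \<circ> \<phi> \<in> Sp_paths X"
proof -
  have ph1: "continuous_on {0..1} \<phi>" "mono_on {0..1} \<phi>" "\<phi> ` {0..1} \<subseteq> {0..1}"
    using ph by (auto simp: Iset_def)
  have phin: "\<phi> t \<in> {0..1}" if "t \<in> {0..1}" for t using ph1(3) that by blast
  from g consider (c) x where "x \<in> topspace (mtop X)" "\<forall>t\<in>{0..1}. g t = x"
    | (p) ps where "goodp (epaths X) ps" "len ps = 1" "\<forall>t\<in>{0..1}. g t = MM ps t"
    by (auto simp: Sp_paths_iff)
  then show ?thesis
  proof cases
    case c
    then show ?thesis using phin by (auto simp: Sp_paths_iff)
  next
    case p
    obtain ps' where "goodp (epaths X) ps'" "len ps' = 1" "\<forall>t\<in>{0..1}. MM ps' t = MM ps (\<phi> t)"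
      using reparam[OF p(1) _ ph1(1,2)] ph1(3) p(2) by auto
    then show ?thesis using p(3) phin by (auto simp: Sp_paths_iff)
  qed
qed

theorem proposition3p4:
  shows "(\<forall>X :: 'a mdspace. is_mdspace X \<longrightarrow> is_dspace (Sp X)) \<and>
         (\<forall>(X :: 'a mdspace) (Y :: 'b mdspace) f. is_mdspace X \<and> is_mdspace Y \<and> mdmap X Y f
              \<longrightarrow> dmap (Sp X) (Sp Y) (Sp_map f)) \<and>
         Sp_map (id :: 'a \<Rightarrow> 'a) = id \<and>
         (\<forall>(f :: 'a \<Rightarrow> 'b) (g :: 'b \<Rightarrow> 'c). Sp_map (g \<circ> f) = Sp_map g \<circ> Sp_map f)"
proof (intro conjI allI impI)
  fix X :: "'a mdspace" assume X: "is_mdspace X"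
  have dg: "delta_generated (mtop X)" and ec: "\<forall>\<gamma>\<in>epaths X. continuous_map (top_of_set {0..1}) (mtop X) \<gamma>"
    using X by (auto simp: is_mdspace_def)
  have cont: "continuous_map (top_of_set {0..1}) (mtop X) g" if "g \<in> Sp_paths X" for g
  proof -
    from that consider (c) x where "x \<in> topspace (mtop X)" "\<forall>t\<in>{0..1}. g t = x"
      | (p) ps where "goodp (epaths X) ps" "len ps = 1" "\<forall>t\<in>{0..1}. g t = MM ps t"
      by (auto simp: Sp_paths_iff)
    then show ?thesis
    proof cases
      case c
      have "continuous_map (top_of_set {0..1}) (mtop X) (\<lambda>t. x)" using c(1) by simp
      then show ?thesis by (rule continuous_map_eq) (use c(2) in auto)
    next
      case p
      have "continuous_map (top_of_set {0..1}) (mtop X) (MM ps)" using cont_MM[OF p(1) ec] p(2) by simp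
      then show ?thesis by (rule continuous_map_eq) (use p(3) in auto)
    qed
  qed
  have constp: "(\<lambda>t. x) \<in> Sp_paths X" if "x \<in> topspace (mtop X)" for x
    using that by (auto simp: Sp_paths_iff)
  show "is_dspace (Sp X)"
    unfolding is_dspace_def Sp_def dspace.simps
    using dg cont Sp_norm_comp[OF X] Sp_reparam[of _ X] constp
    by (auto intro!: path_in_self)
next
  fix X :: "'a mdspace" and Y :: "'b mdspace" and f
  assume H: "is_mdspace X \<and> is_mdspace Y \<and> mdmap X Y f"
  have cf: "continuous_map (mtop X) (mtop Y) f" and ep: "\<forall>\<gamma>\<in>epaths X. path_in (epaths Y) (f \<circ> \<gamma>)"
    using H by (auto simp: mdmap_def)
  have "f \<circ> g \<in> Sp_paths Y" if g: "g \<in> Sp_paths X" for g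
  proof -
    from g consider (c) x where "x \<in> topspace (mtop X)" "\<forall>t\<in>{0..1}. g t = x"
      | (p) ps where "goodp (epaths X) ps" "len ps = 1" "\<forall>t\<in>{0..1}. g t = MM ps t"
      by (auto simp: Sp_paths_iff)
    then show ?thesis
    proof cases
      case c
      have "f x \<in> topspace (mtop Y)" using cf c(1) by (auto simp: continuous_map_def)
      then show ?thesis using c(2) by (auto simp: Sp_paths_iff)
    next
      case p
      from Fm_good[OF p(1) ep] p(2,3) show ?thesis by (auto simp: Sp_paths_iff)
    qed
  qed
  then show "dmap (Sp X) (Sp Y) (Sp_map f)"
    using cf by (auto simp: dmap_def Sp_def Sp_map_def intro!: path_in_self)
qed (auto simp: Sp_map_def)

end
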